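(* For an integer $n>1$ define, for every integer $1<r<n$, $$E^{PD,P}_n(r)=\sum_{k=r+1}^{n}\left(1+\frac{k}{n}\right)\frac{r}{(k-1)k}\frac{\binom{k}{2}}{\binom{n}{2}}=\frac{r(n-r)(3n+1+r)}{2n^2(n-1)},$$ and let $\mathcal{M}(n)$ be a value of $r$ at which $E^{PD,P}_n$ attains its maximum. Then (i) $\lim_{n\to\infty}\mathcal{M}(n)/n=\dfrac{\sqrt{13}-2}{3}=0.53518\dots$; (ii) $\lim_{n\to\infty}E^{PD,P}_n(\mathcal{M}(n))=\dfrac{13\sqrt{13}-35}{27}=0.4397\dots$.
   Context: $E^{PD,P}_n(r)$ is the expected payoff, in the Postdoc secretary problem (goal: select the overall second best of $n$ randomly ordered candidates) with payoff $1+k/n$ when the accepted $k$-th candidate is the overall second best, of the strategy that rejects the first $r$ candidates and then accepts the first candidate which is second best among those seen so far. *)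

theory Defs
  imports Complex_Main
begin

definition E_PDP :: "nat \<Rightarrow> nat \<Rightarrow> real" where
  "E_PDP n r = (\<Sum>k = r + 1..n. (1 + real k / real n) * (real r / (real (k - 1) * real k))
                 * (real (k choose 2) / real (n choose 2)))"

end

theory Submission
  imports Defs "HOL-Real_Asymp.Real_Asymp"
begin


lemma choose2_real: "real (k choose 2) = real k * (real k - 1) / 2"
proof -
  have "even (k * (k - 1))" by (cases k) auto
  then have "2 * (k choose 2) = k * (k - 1)" by (simp add: choose_two)
  then have "2 * real (k choose 2) = real k * real (k - 1)"
    by (metis of_nat_mult of_nat_numeral)
  then show ?thesis by (cases k) auto
qed

lemma sum_lin: "(\<Sum>k = r + 1..r + d. c + real k) = real d * (2 * c + 2 * real r + real d + 1) / 2"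
  by (induction d) (auto simp: algebra_simps add_divide_distrib)

lemma term_alg:
  fixes K N R :: real
  assumes "K \<noteq> 0" "K - 1 \<noteq> 0" "N \<noteq> 0" "N - 1 \<noteq> 0"
  shows "(1 + K / N) * (R / ((K - 1) * K)) * ((K * (K - 1) / 2) / (N * (N - 1) / 2))
      = R / (N^2 * (N - 1)) * (N + K)"
proof -
  have a: "1 + K / N = (N + K) / N" using assms by (simp add: field_simps)
  have b: "(K * (K - 1) / 2) / (N * (N - 1) / 2) = (K * (K - 1)) / (N * (N - 1))" by simp
  have c: "(R / ((K - 1) * K)) * ((K * (K - 1)) / (N * (N - 1))) = R / (N * (N - 1))"
  proof -
    have x: "(K - 1) * K \<noteq> 0" using assms by simp
    have "K * (K - 1) = (K - 1) * K" by (simp add: mult.commute)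
    then show ?thesis using x by simp
  qed
  show ?thesis unfolding a b mult.assoc c using assms by (simp add: field_simps power2_eq_square)
qed

lemma closed_form:
  assumes "1 < n" "1 < r" "r < n"
  shows "E_PDP n r = real r * real (n - r) * (3 * real n + 1 + real r) / (2 * (real n)^2 * (real n - 1))"
proof -
  have t: "(1 + real k / real n) * (real r / (real (k - 1) * real k)) * (real (k choose 2) / real (n choose 2))
      = real r / ((real n)^2 * (real n - 1)) * (real n + real k)" if "k \<in> {r+1..n}" for k
  proof -
    have "k \<ge> 2" using that assms by auto
    then have e1: "real (k - 1) = real k - 1" by auto
    have h: "real n - 1 \<noteq> 0" "real k - 1 \<noteq> 0" "real n \<noteq> 0" "real k \<noteq> 0" using assms \<open>k\<ge>2\<close> by auto
    show ?thesis unfolding e1 choose2_real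
      using term_alg[OF h(4) h(2) h(3) h(1)] by simp
  qed
  have "E_PDP n r = (\<Sum>k = r + 1..n. real r / ((real n)^2 * (real n - 1)) * (real n + real k))"
    unfolding E_PDP_def using t by (rule sum.cong[OF refl])
  also have "\<dots> = real r / ((real n)^2 * (real n - 1)) * (\<Sum>k = r + 1..r + (n - r). real n + real k)"
    using assms by (simp add: sum_distrib_left)
  also have "(\<Sum>k = r + 1..r + (n - r). real n + real k) = real (n - r) * (2 * real n + 2 * real r + real (n-r) + 1) / 2"
    by (rule sum_lin)
  also have "real (n - r) * (2 * real n + 2 * real r + real (n-r) + 1) / 2 = real (n - r) * (3 * real n + 1 + real r) / 2"
    using assms by (simp add: of_nat_diff algebra_simps)
  finally show ?thesis using assms by (simp add: field_simps)
qed


definition hh :: "real \<Rightarrow> real" where "hh x = x * (1 - x) * (3 + x)"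

lemma approx:
  fixes N x :: real
  assumes "N \<ge> 2" "0 \<le> x" "x \<le> 1"
  shows "hh x / 2 \<le> x*N*(N - x*N)*(3*N+1+x*N)/(2*N^2*(N-1))"
    and "x*N*(N - x*N)*(3*N+1+x*N)/(2*N^2*(N-1)) \<le> hh x / 2 + 2 / N"
proof -
  have eq: "x*N*(N - x*N)*(3*N+1+x*N)/(2*N^2*(N-1)) = hh x / 2 + x*(1-x)*(4+x)/(2*(N-1))"
    using assms unfolding hh_def by (simp add: field_simps power2_eq_square)
  have p0: "0 \<le> x*(1-x)*(4+x)" using assms by simp
  have p1: "x*(1-x) \<le> 1/4"
  proof -
    have "0 \<le> (x - 1/2)^2" by simp
    then show ?thesis by (simp add: power2_eq_square algebra_simps)
  qed
  have p2: "x*(1-x)*(4+x) \<le> 5/4"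
  proof -
    have "x*(1-x)*(4+x) \<le> (1/4) * 5"
      by (rule mult_mono) (use assms p1 in auto)
    then show ?thesis by simp
  qed
  have "x*(1-x)*(4+x)/(2*(N-1)) \<le> (5/4)/(2*(N-1))"
    by (rule divide_right_mono) (use p2 assms in auto)
  also have "\<dots> \<le> 2 / N" using assms by (simp add: field_simps)
  finally have up: "x*(1-x)*(4+x)/(2*(N-1)) \<le> 2 / N" .
  have lo: "0 \<le> x*(1-x)*(4+x)/(2*(N-1))" using p0 assms by simp
  show "hh x / 2 \<le> x*N*(N - x*N)*(3*N+1+x*N)/(2*N^2*(N-1))" using eq lo by simp
  show "x*N*(N - x*N)*(3*N+1+x*N)/(2*N^2*(N-1)) \<le> hh x / 2 + 2 / N" using eq up by simp
qed

definition aa :: real where "aa = (sqrt 13 - 2) / 3"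

lemma aa_eq: "3 * aa^2 + 4 * aa - 3 = 0"
  unfolding aa_def by (simp add: power2_eq_square algebra_simps add_divide_distrib diff_divide_distrib)

lemma aa_bounds: "1/3 < aa" "aa < 2/3"
proof -
  have "3 < sqrt 13" by (rule real_less_rsqrt) simp
  moreover have "sqrt 13 < sqrt (4^2)" by (rule real_sqrt_less_mono) simp
  ultimately have "3 < sqrt 13" "sqrt 13 < 4" by simp_all
  then show "1/3 < aa" "aa < 2/3" unfolding aa_def by simp_all
qed

lemma hh_diff: "hh aa - hh x = (x - aa)^2 * (x + 2 + 2*aa)"
proof -
  have "hh aa - hh x - (x - aa)^2 * (x + 2 + 2*aa) = (x - aa) * (3 * aa^2 + 4 * aa - 3)"
    unfolding hh_def by (simp add: power2_eq_square power3_eq_cube algebra_simps)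
  then show ?thesis using aa_eq by simp
qed

lemma hh_val: "hh aa / 2 = (13 * sqrt 13 - 35) / 27"
proof -
  have s2: "sqrt 13 * sqrt 13 = 13" by simp
  have "hh aa / 2 = aa^2 + aa^3"
  proof -
    have "hh aa = 2*aa^2 + 2*aa^3 - aa * (3 * aa^2 + 4 * aa - 3)"
      unfolding hh_def by (simp add: power2_eq_square power3_eq_cube algebra_simps)
    then show ?thesis using aa_eq by simp
  qed
  also have "aa^2 = (17 - 4 * sqrt 13) / 9"
    unfolding aa_def by (simp add: power2_eq_square algebra_simps s2 divide_simps)
  also have "aa^3 = (25 * sqrt 13 - 86) / 27"
  proof -
    have "aa^3 = aa * aa^2" by (simp add: power2_eq_square power3_eq_cube)
    also have "aa^2 = (17 - 4 * sqrt 13) / 9"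
      unfolding aa_def by (simp add: power2_eq_square algebra_simps s2 divide_simps)
    finally show ?thesis unfolding aa_def by (simp add: algebra_simps s2 divide_simps)
  qed
  finally show ?thesis by (simp add: field_simps)
qed


definition FF :: "nat \<Rightarrow> nat \<Rightarrow> real" where
  "FF n r = real r * real (n - r) * (3 * real n + 1 + real r) / (2 * (real n)^2 * (real n - 1))"

lemma FF_approx:
  assumes "n \<ge> 2" "r \<le> n"
  shows "hh (real r / real n) / 2 \<le> FF n r" "FF n r \<le> hh (real r / real n) / 2 + 2 / real n"
proof -
  let ?x = "real r / real n" and ?N = "real n"
  have N: "?N \<ge> 2" using assms by simp
  have x: "0 \<le> ?x" "?x \<le> 1" using assms by auto
  have e1: "?x * ?N = real r" using assms by simp
  have e2: "?N - ?x * ?N = real (n - r)" using assms by (simp add: of_nat_diff)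
  have ff: "FF n r = ?x*?N*(?N - ?x*?N)*(3*?N+1+?x*?N)/(2*?N^2*(?N-1))"
  proof -
    have e3: "real (n - r) = real n - real r" using assms by (simp add: of_nat_diff)
    show ?thesis unfolding FF_def by (simp only: e1 e3)
  qed
  show "hh ?x / 2 \<le> FF n r" unfolding ff by (rule approx(1)[OF N x])
  show "FF n r \<le> hh ?x / 2 + 2 / ?N" unfolding ff by (rule approx(2)[OF N x])
qed

lemma main_bounds:
  fixes M :: "nat \<Rightarrow> nat"
  assumes argmax: "\<And>n. n \<ge> 3 \<Longrightarrow> 1 < M n \<and> M n < n \<and>
                     (\<forall>r. 1 < r \<and> r < n \<longrightarrow> FF n r \<le> FF n (M n))"
    and n: "n \<ge> 6"
  shows "\<bar>real (M n) / real n - aa\<bar> \<le> sqrt (5 / real n)"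
    and "\<bar>FF n (M n) - hh aa / 2\<bar> \<le> 3 / real n"
proof -
  define m where "m = M n"
  define r0 where "r0 = nat \<lfloor>aa * real n\<rfloor>"
  have N: "real n \<ge> 6" using n by simp
  have mb: "1 < m" "m < n" "\<And>r. 1 < r \<Longrightarrow> r < n \<Longrightarrow> FF n r \<le> FF n m"
    using argmax[of n] n unfolding m_def by auto
  have fl1: "real_of_int \<lfloor>aa * real n\<rfloor> \<le> aa * real n" by (rule of_int_floor_le)
  have fl2: "aa * real n - 1 < real_of_int \<lfloor>aa * real n\<rfloor>" by (rule real_of_int_floor_gt_diff_one)
  have an: "real n / 3 < aa * real n" "aa * real n < 2 * real n / 3" using aa_bounds N by auto
  have flpos: "1 < \<lfloor>aa * real n\<rfloor>" using fl2 an N by linarith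
  have r0r: "real r0 = real_of_int \<lfloor>aa * real n\<rfloor>" unfolding r0_def using flpos by simp
  have r0b: "1 < r0" "r0 < n"
  proof -
    show "1 < r0" using flpos unfolding r0_def by simp
    have "real r0 < real n" using r0r fl1 an by linarith
    then show "r0 < n" by simp
  qed
  have n2: "n \<ge> 2" using n by simp
  let ?x = "real m / real n" and ?y = "real r0 / real n"
  have A1: "hh ?x / 2 \<le> FF n m" "FF n m \<le> hh ?x / 2 + 2 / real n"
    using FF_approx[OF n2, of m] mb by auto
  have B1: "hh ?y / 2 \<le> FF n r0"
    using FF_approx[OF n2, of r0] r0b by auto
  have C: "FF n r0 \<le> FF n m" using mb(3) r0b by auto
  have ydist: "\<bar>?y - aa\<bar> \<le> 1 / real n"
  proof -
    have "real r0 \<le> aa * real n" "aa * real n - 1 < real r0" using r0r fl1 fl2 by auto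
    then have "\<bar>real r0 - aa * real n\<bar> \<le> 1" by linarith
    moreover have "?y - aa = (real r0 - aa * real n) / real n" using N by (simp add: field_simps)
    ultimately show ?thesis using N by (simp add: divide_right_mono)
  qed
  have y01: "0 \<le> ?y" "?y \<le> 1" using r0b by auto
  have x01: "0 \<le> ?x" "?x \<le> 1" using mb by auto
  have hy: "hh aa - hh ?y \<le> 5 / real n"
  proof -
    have "(?y - aa)^2 \<le> (1 / real n)^2"
      using ydist by (metis abs_ge_zero power2_abs power_mono)
    also have "\<dots> \<le> 1 / real n" using N by (simp add: power2_eq_square divide_simps)
    finally have q: "(?y - aa)^2 \<le> 1 / real n" .
    have w: "?y + 2 + 2*aa \<le> 5" using y01 aa_bounds by linarith
    have "(?y - aa)^2 * (?y + 2 + 2*aa) \<le> (1 / real n) * 5"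
      by (rule mult_mono) (use q w y01 aa_bounds in auto)
    then show ?thesis unfolding hh_diff by simp
  qed
  have hx: "2 * (?x - aa)^2 \<le> hh aa - hh ?x"
  proof -
    have w: "2 \<le> ?x + 2 + 2*aa" using x01 aa_bounds by linarith
    have "(?x - aa)^2 * 2 \<le> (?x - aa)^2 * (?x + 2 + 2*aa)"
      by (rule mult_left_mono) (use w in auto)
    then show ?thesis unfolding hh_diff by simp
  qed
  have sq: "(?x - aa)^2 \<le> 5 / real n"
    using hx hy A1 B1 C by (simp add: field_simps)
  show "\<bar>?x - aa\<bar> \<le> sqrt (5 / real n)"
    using real_sqrt_le_mono[OF sq] by simp
  have hx0: "hh ?x \<le> hh aa" using hx by (smt (verit) zero_le_power2)
  show "\<bar>FF n m - hh aa / 2\<bar> \<le> 3 / real n"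
  proof -
    have d1: "2 / real n \<le> 3 / real n" "5 / real n / 2 \<le> 3 / real n" using N by (simp_all add: divide_simps)
    have aux: "\<And>a b c e t :: real. a / 2 \<le> b \<Longrightarrow> b \<le> c \<Longrightarrow> e - a \<le> t \<Longrightarrow> e / 2 - t / 2 \<le> c"
      by linarith
    have "hh aa / 2 - 5 / real n / 2 \<le> FF n m" by (rule aux[OF B1 C hy])
    moreover have "FF n m \<le> hh aa / 2 + 2 / real n" using A1 hx0 by linarith
    ultimately show ?thesis using d1 by (simp add: abs_le_iff)
  qed
qed


theorem theorem10:
  fixes M :: "nat \<Rightarrow> nat"
  assumes argmax: "\<And>n. n \<ge> 3 \<Longrightarrow> 1 < M n \<and> M n < n \<and>
                     (\<forall>r. 1 < r \<and> r < n \<longrightarrow> E_PDP n r \<le> E_PDP n (M n))"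
  shows "(\<forall>n r. 1 < n \<and> 1 < r \<and> r < n \<longrightarrow>
            E_PDP n r = real r * real (n - r) * (3 * real n + 1 + real r) / (2 * (real n)^2 * (real n - 1)))
       \<and> (\<lambda>n. real (M n) / real n) \<longlonglongrightarrow> (sqrt 13 - 2) / 3
       \<and> (\<lambda>n. E_PDP n (M n)) \<longlonglongrightarrow> (13 * sqrt 13 - 35) / 27"
proof -
  have cf: "\<And>n r. 1 < n \<Longrightarrow> 1 < r \<Longrightarrow> r < n \<Longrightarrow> E_PDP n r = FF n r"
    unfolding FF_def by (rule closed_form)
  have am: "\<And>n. n \<ge> 3 \<Longrightarrow> 1 < M n \<and> M n < n \<and>
                     (\<forall>r. 1 < r \<and> r < n \<longrightarrow> FF n r \<le> FF n (M n))"
  proof -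
    fix n :: nat assume n: "n \<ge> 3"
    show "1 < M n \<and> M n < n \<and> (\<forall>r. 1 < r \<and> r < n \<longrightarrow> FF n r \<le> FF n (M n))"
      using argmax[OF n] cf[of n] n by auto
  qed
  have ev: "\<forall>\<^sub>F n in sequentially. n \<ge> 6" by (rule eventually_ge_at_top)
  have lim1: "(\<lambda>n. real (M n) / real n) \<longlonglongrightarrow> aa"
  proof (rule tendsto_sandwich[of "\<lambda>n. aa - sqrt (5 / real n)" _ _ "\<lambda>n. aa + sqrt (5 / real n)"])
    show "\<forall>\<^sub>F n in sequentially. aa - sqrt (5 / real n) \<le> real (M n) / real n"
      using ev by eventually_elim (use main_bounds(1)[OF am] in \<open>force simp: abs_le_iff\<close>)
    show "\<forall>\<^sub>F n in sequentially. real (M n) / real n \<le> aa + sqrt (5 / real n)"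
      using ev by eventually_elim (use main_bounds(1)[OF am] in \<open>force simp: abs_le_iff\<close>)
    show "(\<lambda>n. aa - sqrt (5 / real n)) \<longlonglongrightarrow> aa" by real_asymp
    show "(\<lambda>n. aa + sqrt (5 / real n)) \<longlonglongrightarrow> aa" by real_asymp
  qed
  have lim2: "(\<lambda>n. E_PDP n (M n)) \<longlonglongrightarrow> hh aa / 2"
  proof (rule tendsto_sandwich[of "\<lambda>n. hh aa / 2 - 3 / real n" _ _ "\<lambda>n. hh aa / 2 + 3 / real n"])
    have e: "\<And>n. n \<ge> 6 \<Longrightarrow> E_PDP n (M n) = FF n (M n)"
      using am cf by (metis (no_types, lifting) add_leD2 eval_nat_numeral(3) less_trans numeral_le_iff numeral_less_iff semiring_norm(70,76,79) zero_less_Suc le_less_trans linorder_not_less)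
    show "\<forall>\<^sub>F n in sequentially. hh aa / 2 - 3 / real n \<le> E_PDP n (M n)"
      using ev by eventually_elim (use main_bounds(2)[OF am] e in \<open>force simp: abs_le_iff\<close>)
    show "\<forall>\<^sub>F n in sequentially. E_PDP n (M n) \<le> hh aa / 2 + 3 / real n"
      using ev by eventually_elim (use main_bounds(2)[OF am] e in \<open>force simp: abs_le_iff\<close>)
    show "(\<lambda>n. hh aa / 2 - 3 / real n) \<longlonglongrightarrow> hh aa / 2" by real_asymp
    show "(\<lambda>n. hh aa / 2 + 3 / real n) \<longlonglongrightarrow> hh aa / 2" by real_asymp
  qed
  show ?thesis
    using closed_form lim1 lim2 unfolding aa_def hh_val[symmetric] by blast
qed

end
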